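(* Let $\mu_X\in\mathbb R$, $\sigma_X>0$, $R,R_c\ge0$, $P\ge0$. For any distribution $p_{\hat X}$ on $\mathbb R$ with finite second moment, mean $\mu_{\hat X}$ and variance $\sigma_{\hat X}^2$ such that $\phi_{KL}(p_{\hat X}\|\mathcal N(\mu_X,\sigma_X^2))\le P$, we have $$D(R+R_c|p_{\hat X})\ge\sigma_{\hat X}^2\exp\Big(-2\big(R+R_c+P-\phi_{KL}(\mathcal N(\mu_{\hat X},\sigma_{\hat X}^2)\|\mathcal N(\mu_X,\sigma_X^2))\big)\Big).$$
   Context: All logarithms are natural. $\phi_{KL}(q\|p):=\mathbb E_{Z\sim q}[\log\frac{q(Z)}{p(Z)}]$ (or $+\infty$ if $q\not\ll p$). For a distribution $p$ of a real random variable $Z$ with finite second moment and $r\ge0$, $D(r|p):=\min_{p_{V|Z}:\,I(Z;V)\le r}\mathbb E[(Z-V)^2]$ (quadratic distortion-rate function). *)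

theory Defs
  imports "HOL-Probability.Probability"
begin

text \<open>KL divergence phi_KL(q||p) = E_q[log dq/dp], +infinity if q is not absolutely
continuous w.r.t. p (or the log-likelihood ratio is not q-integrable; for probability
measures the negative part is always integrable, so this is exactly the +infinity case).\<close>
definition phi_KL :: "'a measure \<Rightarrow> 'a measure \<Rightarrow> ereal" where
  "phi_KL q p =
     (if sets q = sets p \<and> absolutely_continuous p q
         \<and> integrable q (\<lambda>x. ln (enn2real (RN_deriv p q x)))
      then ereal (\<integral>x. ln (enn2real (RN_deriv p q x)) \<partial>q)
      else \<infinity>)"

definition gauss :: "real \<Rightarrow> real \<Rightarrow> real measure" where
  "gauss mu s2 = (if s2 > 0 then density lborel (normal_density mu (sqrt s2))
                  else return borel mu)"

definition mutual_info :: "(real \<times> real) measure \<Rightarrow> ereal" where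
  "mutual_info J = phi_KL J (distr J borel fst \<Otimes>\<^sub>M distr J borel snd)"

text \<open>Quadratic distortion-rate function D(r|p): infimum over all joint distributions
of (Z,V) with Z ~ p and I(Z;V) <= r (equivalently over all channels p_{V|Z}).\<close>
definition distortion_rate :: "real \<Rightarrow> real measure \<Rightarrow> ennreal" where
  "distortion_rate r p =
     (INF J \<in> {J. prob_space J \<and> sets J = sets (borel \<Otimes>\<^sub>M borel)
                 \<and> distr J borel fst = p \<and> mutual_info J \<le> ereal r}.
        \<integral>\<^sup>+ z. ennreal ((fst z - snd z)\<^sup>2) \<partial>J)"

end

theory Submission
  imports Defs
begin


lemma gauss_pos: "s2 > 0 \<Longrightarrow> gauss m s2 = density lborel (normal_density m (sqrt s2))"
  by (simp add: gauss_def)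

lemma gauss_KL:
  fixes m s2 mX sX :: real
  assumes s2: "s2 > 0" and sX: "sX > 0"
  shows "phi_KL (gauss m s2) (gauss mX (sX\<^sup>2)) =
    ereal (ln (sX\<^sup>2 / s2) / 2 + (s2 + (m - mX)\<^sup>2) / (2 * sX\<^sup>2) - 1 / 2)"
proof -
  define s where "s = sqrt s2"
  have s: "s > 0" "s\<^sup>2 = s2" using s2 by (auto simp: s_def)
  define \<phi> where "\<phi> = normal_density m s"
  define g where "g = normal_density mX sX"
  have gpos: "\<And>x. g x > 0" by (simp add: g_def normal_density_pos[OF sX])
  have gnz: "\<And>x. normal_density mX sX x \<noteq> 0" using gpos unfolding g_def by (metis less_irrefl)
  have phipos: "\<And>x. \<phi> x > 0" by (simp add: \<phi>_def normal_density_pos[OF s(1)])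
  have G: "gauss mX (sX\<^sup>2) = density lborel g" using sX by (simp add: gauss_def g_def)
  have N: "gauss m s2 = density lborel \<phi>" using s2 by (simp add: gauss_def \<phi>_def s_def)
  define G' where "G' = density lborel g"
  interpret G': prob_space G' unfolding G'_def g_def by (intro prob_space_normal_density sX)
  have NG: "density lborel \<phi> = density G' (\<lambda>x. ennreal (\<phi> x / g x))"
    unfolding G'_def
    by (subst density_density_eq) (auto simp: \<phi>_def g_def ennreal_mult[symmetric] gpos[unfolded g_def] gnz less_imp_le intro!: density_cong AE_I2)
  have sets_eq: "sets (density lborel \<phi>) = sets G'" by (simp add: G'_def)
  have ac: "absolutely_continuous G' (density lborel \<phi>)"
    unfolding NG by (rule absolutely_continuousI_density) (simp add: \<phi>_def g_def G'_def)
  have RN: "AE x in G'. ennreal (\<phi> x / g x) = RN_deriv G' (density lborel \<phi>) x"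
    unfolding NG by (rule G'.RN_deriv_unique) (auto simp: \<phi>_def g_def G'_def)
  have RN2: "AE x in density lborel \<phi>. ln (enn2real (RN_deriv G' (density lborel \<phi>) x)) = ln (\<phi> x / g x)"
    using absolutely_continuous_AE[OF sets_eq ac RN]
    by eventually_elim (metis enn2real_ennreal gpos phipos less_imp_le divide_nonneg_pos)
  have lnphi: "\<And>x. ln (\<phi> x / g x) = - ln (2 * pi * s2)/2 - (x - m)\<^sup>2 / (2 * s2) + ln (2 * pi * sX\<^sup>2)/2 + (x - mX)\<^sup>2 / (2 * sX\<^sup>2)"
  proof -
    fix x
    have l1: "\<And>mu sig. sig > 0 \<Longrightarrow> ln (normal_density mu sig x) = - (x - mu)\<^sup>2 / (2 * sig\<^sup>2) - ln (2 * pi * sig\<^sup>2) / 2"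
      by (simp add: normal_density_def ln_div ln_sqrt)
    have "ln (\<phi> x / g x) = ln (\<phi> x) - ln (g x)" using phipos[of x] gpos[of x] by (simp add: ln_div)
    then show "?thesis x" unfolding \<phi>_def g_def using l1[OF s(1)] l1[OF sX] s(2) by simp
  qed
  define c0 where "c0 = ln (sX\<^sup>2 / s2) / 2 + (m - mX)\<^sup>2 / (2 * sX\<^sup>2)"
  define c1 where "c1 = 1 / (2 * sX\<^sup>2) - 1 / (2 * s2)"
  define c2 where "c2 = (m - mX) / sX\<^sup>2"
  have feq: "(\<lambda>x. \<phi> x * ln (\<phi> x / g x)) = (\<lambda>x. c0 * (\<phi> x * (x - m)^(2*0)) + c1 * (\<phi> x * (x - m)^(2*1)) + c2 * (\<phi> x * (x - m)^(2*0+1)))"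
  proof
    fix x
    have A: "- ln (2 * pi * s2)/2 + ln (2 * pi * sX\<^sup>2)/2 = ln (sX\<^sup>2 / s2) / 2"
      using s2 sX by (simp add: ln_div ln_mult field_simps)
    have "ln (\<phi> x / g x) = ln (sX\<^sup>2 / s2) / 2 - (x - m)\<^sup>2 / (2 * s2) + (x - mX)\<^sup>2 / (2 * sX\<^sup>2)"
      unfolding lnphi A[symmetric] by simp
    moreover have "\<And>L. L / 2 - (x - m)\<^sup>2 / (2 * s2) + (x - mX)\<^sup>2 / (2 * sX\<^sup>2) =
       (L / 2 + (m - mX)\<^sup>2 / (2 * sX\<^sup>2)) + (1 / (2 * sX\<^sup>2) - 1 / (2 * s2)) * (x - m)^2 + ((m - mX) / sX\<^sup>2) * (x - m)"
      using s2 sX by (simp add: field_simps power2_eq_square)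
    ultimately have "ln (\<phi> x / g x) = c0 + c1 * (x - m)^2 + c2 * (x - m)"
      unfolding c0_def c1_def c2_def by simp
    then have "\<phi> x * ln (\<phi> x / g x) = \<phi> x * (c0 + c1 * (x - m)^2 + c2 * (x - m))" by simp
    then show "\<phi> x * ln (\<phi> x / g x) = c0 * (\<phi> x * (x - m)^(2*0)) + c1 * (\<phi> x * (x - m)^(2*1)) + c2 * (\<phi> x * (x - m)^(2*0+1))"
      by (simp add: algebra_simps power2_eq_square)
  qed
  have hb: "has_bochner_integral lborel (\<lambda>x. \<phi> x * ln (\<phi> x / g x)) (c0 * 1 + c1 * s2 + c2 * 0)"
  proof -
    have e0: "has_bochner_integral lborel (\<lambda>x. \<phi> x * (x - m)^(2*0)) 1"
      using normal_moment_even[where k=0 and \<mu>=m and \<sigma>=s, OF s(1)] unfolding \<phi>_def by simp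
    have e1: "has_bochner_integral lborel (\<lambda>x. \<phi> x * (x - m)^(2*1)) s2"
      using normal_moment_even[where k=1 and \<mu>=m and \<sigma>=s, OF s(1)] unfolding \<phi>_def s(2)[symmetric] by simp
    have o1: "has_bochner_integral lborel (\<lambda>x. \<phi> x * (x - m)^(2*0+1)) 0"
      using normal_moment_odd[where k=0 and \<mu>=m and \<sigma>=s, OF s(1)] unfolding \<phi>_def by simp
    show ?thesis unfolding feq
      by (intro has_bochner_integral_add has_bochner_integral_mult_right e0 e1 o1)
  qed
  have val: "c0 * 1 + c1 * s2 + c2 * 0 = ln (sX\<^sup>2 / s2) / 2 + (s2 + (m - mX)\<^sup>2) / (2 * sX\<^sup>2) - 1 / 2"
    unfolding c0_def c1_def c2_def using s2 sX by (simp add: field_simps)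
  have meas: "(\<lambda>x. ln (\<phi> x / g x)) \<in> borel_measurable borel" unfolding \<phi>_def g_def by measurable
  have meas2: "(\<lambda>x. ln (enn2real (RN_deriv G' (density lborel \<phi>) x))) \<in> borel_measurable (density lborel \<phi>)"
  proof -
    have "RN_deriv G' (density lborel \<phi>) \<in> borel_measurable borel"
      using borel_measurable_RN_deriv[of G' "density lborel \<phi>"] by (simp add: G'_def)
    then show ?thesis by simp
  qed
  have int1: "integrable (density lborel \<phi>) (\<lambda>x. ln (\<phi> x / g x))"
    using integrable.intros[OF hb] meas by (subst integrable_density) (auto simp: \<phi>_def)
  have int2: "integrable (density lborel \<phi>) (\<lambda>x. ln (enn2real (RN_deriv G' (density lborel \<phi>) x)))"
    by (rule integrable_cong_AE_imp[OF int1 meas2]) (use RN2 in \<open>auto elim: AE_mp\<close>)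
  have I: "(\<integral>x. ln (enn2real (RN_deriv G' (density lborel \<phi>) x)) \<partial>density lborel \<phi>) = c0 * 1 + c1 * s2 + c2 * 0"
  proof -
    have "(\<integral>x. ln (enn2real (RN_deriv G' (density lborel \<phi>) x)) \<partial>density lborel \<phi>) = (\<integral>x. ln (\<phi> x / g x) \<partial>density lborel \<phi>)"
      by (rule integral_cong_AE[OF meas2 _ RN2]) (simp add: meas)
    also have "\<dots> = (\<integral>x. \<phi> x * ln (\<phi> x / g x) \<partial>lborel)"
      by (subst integral_density) (auto simp: \<phi>_def g_def)
    also have "\<dots> = c0 * 1 + c1 * s2 + c2 * 0" using hb by (rule has_bochner_integral_integral_eq)
    finally show ?thesis .
  qed
  show ?thesis
    unfolding phi_KL_def N G G'_def[symmetric] using sets_eq ac int2 I val by simp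
qed


lemma pw_le: "0 \<le> a \<Longrightarrow> 0 \<le> b \<Longrightarrow> r * ennreal (a / (b * enn2real r)) \<le> ennreal (a / b)"
proof (cases r)
  case (real t)
  assume a: "0 \<le> a" "0 \<le> b"
  show ?thesis
  proof (cases "t = 0")
    case True then show ?thesis using real by simp
  next
    case False
    then have "ennreal t * ennreal (a / (b * t)) = ennreal (t * (a / (b * t)))"
      using real a by (intro ennreal_mult[symmetric]) auto
    also have "t * (a / (b * t)) = a / b" using False by simp
    finally have eq: "ennreal t * ennreal (a / (b * t)) = ennreal (a / b)" .
    have "0 \<le> t" using real by simp
    have "r * ennreal (a / (b * enn2real r)) = ennreal t * ennreal (a / (b * t))"
      using real \<open>0 \<le> t\<close> by simp
    then show ?thesis using eq by simp
  qed
qed simp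

lemma core:
  fixes mX sX r P d :: real and p :: "real measure" and J :: "(real \<times> real) measure"
  assumes sX: "sX > 0" and d: "d > 0"
    and pP: "prob_space p" and psets: "sets p = sets borel" and psq: "integrable p (\<lambda>x. x\<^sup>2)"
    and KL: "phi_KL p (gauss mX (sX\<^sup>2)) \<le> ereal P"
    and JP: "prob_space J" and Jsets: "sets J = sets (borel \<Otimes>\<^sub>M borel)"
    and Jfst: "distr J borel fst = p" and MI: "mutual_info J \<le> ereal r"
    and fin: "(\<integral>\<^sup>+ z. ennreal ((fst z - snd z)\<^sup>2) \<partial>J) < \<infinity>"
  shows "- ln (2 * pi * d) / 2 - enn2real (\<integral>\<^sup>+ z. ennreal ((fst z - snd z)\<^sup>2) \<partial>J) / (2 * d)
          + ln (2 * pi * sX\<^sup>2) / 2 + (\<integral>x. (x - mX)\<^sup>2 \<partial>p) / (2 * sX\<^sup>2) \<le> P + r"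
proof -
  define g where "g = normal_density mX sX"
  define G where "G = density lborel g"
  have Gdef: "gauss mX (sX\<^sup>2) = G" using sX by (simp add: gauss_def G_def g_def)
  interpret G: prob_space G unfolding G_def g_def by (intro prob_space_normal_density sX)
  have gpos: "\<And>x. g x > 0" by (simp add: g_def normal_density_pos[OF sX])
  have Gsets: "sets G = sets borel" by (simp add: G_def)
  interpret p: prob_space p by (rule pP)
  define Q where "Q = distr J borel snd"
  interpret J: prob_space J by (rule JP)
  have measJ: "\<And>N. measurable J N = measurable (borel \<Otimes>\<^sub>M borel) N"
    by (rule measurable_cong_sets[OF Jsets refl])
  interpret Q: prob_space Q unfolding Q_def by (rule J.prob_space_distr) (simp add: measJ)
  have Qsets: "sets Q = sets borel" by (simp add: Q_def)
  define M where "M = p \<Otimes>\<^sub>M Q"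
  interpret pQ: pair_prob_space p Q by unfold_locales
  interpret M: prob_space M unfolding M_def by (rule pQ.P.prob_space_axioms)
  have Msets: "sets M = sets (borel \<Otimes>\<^sub>M borel)" unfolding M_def using psets Qsets by (rule sets_pair_measure_cong)
  have measM: "\<And>N. measurable M N = measurable (borel \<Otimes>\<^sub>M borel) N"
    by (rule measurable_cong_sets[OF Msets refl])
  have measp: "\<And>N. measurable p N = measurable borel N"
    by (rule measurable_cong_sets[OF psets refl])
  have measG: "\<And>N. measurable G N = measurable borel N"
    by (rule measurable_cong_sets[OF Gsets refl])

  define lnf where "lnf x = ln (enn2real (RN_deriv G p x))" for x
  have KLc: "sets p = sets G \<and> absolutely_continuous G p \<and> integrable p lnf \<and> (\<integral>x. lnf x \<partial>p) \<le> P"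
    using KL unfolding Gdef phi_KL_def lnf_def by (auto split: if_splits)
  define lnr where "lnr z = ln (enn2real (RN_deriv M J z))" for z
  have MIc: "sets J = sets M \<and> absolutely_continuous M J \<and> integrable J lnr \<and> (\<integral>z. lnr z \<partial>J) \<le> r"
    using MI unfolding mutual_info_def Jfst Q_def[symmetric] M_def[symmetric] phi_KL_def lnr_def
    by (auto split: if_splits)
  define \<rho> where "\<rho> = RN_deriv M J"
  define \<rho>p where "\<rho>p = RN_deriv G p"
  have \<rho>meas[measurable]: "\<rho> \<in> borel_measurable (borel \<Otimes>\<^sub>M borel)"
    using borel_measurable_RN_deriv[of M J] unfolding \<rho>_def measM .
  have \<rho>pmeas[measurable]: "\<rho>p \<in> borel_measurable borel"
    using borel_measurable_RN_deriv[of G p] unfolding \<rho>p_def measG .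
  have Jdens: "density M \<rho> = J" unfolding \<rho>_def using MIc by (intro M.density_RN_deriv) auto
  have pdens: "density G \<rho>p = p" unfolding \<rho>p_def using KLc by (intro G.density_RN_deriv) auto
  have AEJ\<rho>: "AE z in J. 0 < \<rho> z \<and> \<rho> z \<noteq> \<infinity>"
  proof -
    have "AE z in M. \<rho> z \<noteq> \<infinity>" unfolding \<rho>_def using MIc
      by (intro M.RN_deriv_finite) (auto intro: J.sigma_finite_measure_axioms)
    then have "AE z in M. 0 < \<rho> z \<longrightarrow> 0 < \<rho> z \<and> \<rho> z \<noteq> \<infinity>" by eventually_elim auto
    then show ?thesis unfolding Jdens[symmetric] by (subst AE_density) (auto simp: measM)
  qed
  have AEp: "AE x in p. 0 < \<rho>p x \<and> \<rho>p x \<noteq> \<infinity>"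
  proof -
    have "AE x in G. \<rho>p x \<noteq> \<infinity>" unfolding \<rho>p_def using KLc
      by (intro G.RN_deriv_finite) (auto intro: p.sigma_finite_measure_axioms)
    then have "AE x in G. 0 < \<rho>p x \<longrightarrow> 0 < \<rho>p x \<and> \<rho>p x \<noteq> \<infinity>" by eventually_elim auto
    then show ?thesis unfolding pdens[symmetric] by (subst AE_density) (auto simp: measG)
  qed
  have AEJp: "AE z in J. 0 < \<rho>p (fst z) \<and> \<rho>p (fst z) \<noteq> \<infinity>"
    using AEp unfolding Jfst[symmetric] by (subst (asm) AE_distr_iff) (auto simp: measJ)
  define fr where "fr x = enn2real (\<rho>p x)" for x
  define \<rho>r where "\<rho>r z = enn2real (\<rho> z)" for z
  define ph where "ph z = normal_density (snd z) (sqrt d) (fst z)" for z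
  define h where "h z = ph z / (g (fst z) * fr (fst z) * \<rho>r z)" for z
  have sd: "sqrt d > 0" using d by simp
  have phpos: "\<And>z. ph z > 0" unfolding ph_def by (rule normal_density_pos[OF sd])
  have [measurable]: "g \<in> borel_measurable borel" unfolding g_def by simp
  have [measurable]: "ph \<in> borel_measurable (borel \<Otimes>\<^sub>M borel)" unfolding ph_def normal_density_def by measurable
  have [measurable]: "h \<in> borel_measurable (borel \<Otimes>\<^sub>M borel)" unfolding h_def fr_def \<rho>r_def by measurable
  have nd1: "\<And>v. (\<integral>\<^sup>+ x. ennreal (normal_density v (sqrt d) x) \<partial>lborel) = 1"
    using sd by (simp add: nn_integral_eq_integral normal_density_nonneg)
  have inner: "(\<integral>\<^sup>+ x. ennreal (ph (x, v) / (g x * fr x)) \<partial>p) \<le> 1" for v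
  proof -
    have "(\<integral>\<^sup>+ x. ennreal (ph (x, v) / (g x * fr x)) \<partial>p)
        = (\<integral>\<^sup>+ x. \<rho>p x * ennreal (ph (x, v) / (g x * fr x)) \<partial>G)"
      unfolding pdens[symmetric] by (subst nn_integral_density) (auto simp: measG fr_def)
    also have "\<dots> = (\<integral>\<^sup>+ x. ennreal (g x) * (\<rho>p x * ennreal (ph (x, v) / (g x * fr x))) \<partial>lborel)"
      unfolding G_def by (subst nn_integral_density) (auto simp: fr_def)
    also have "\<dots> \<le> (\<integral>\<^sup>+ x. ennreal (normal_density v (sqrt d) x) \<partial>lborel)"
    proof (rule nn_integral_mono)
      fix x
      have "\<rho>p x * ennreal (ph (x, v) / (g x * fr x)) \<le> ennreal (ph (x, v) / g x)"
        unfolding fr_def by (rule pw_le) (use phpos gpos in \<open>auto intro: less_imp_le\<close>)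
      then have "ennreal (g x) * (\<rho>p x * ennreal (ph (x, v) / (g x * fr x))) \<le> ennreal (g x) * ennreal (ph (x, v) / g x)"
        by (rule mult_left_mono) simp
      also have "\<dots> = ennreal (ph (x, v))" using gpos[of x] phpos[of "(x,v)"]
        by (simp add: ennreal_mult[symmetric])
      finally show "ennreal (g x) * (\<rho>p x * ennreal (ph (x, v) / (g x * fr x))) \<le> ennreal (normal_density v (sqrt d) x)"
        by (simp add: ph_def)
    qed
    finally show ?thesis using nd1 by simp
  qed
  have nn1: "(\<integral>\<^sup>+ z. ennreal (h z) \<partial>J) \<le> 1"
  proof -
    have "(\<integral>\<^sup>+ z. ennreal (h z) \<partial>J) = (\<integral>\<^sup>+ z. \<rho> z * ennreal (h z) \<partial>M)"
      unfolding Jdens[symmetric] by (subst nn_integral_density) (auto simp: measM)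
    also have "\<dots> \<le> (\<integral>\<^sup>+ z. ennreal (ph z / (g (fst z) * fr (fst z))) \<partial>M)"
    proof (rule nn_integral_mono)
      fix z show "\<rho> z * ennreal (h z) \<le> ennreal (ph z / (g (fst z) * fr (fst z)))"
        unfolding h_def \<rho>r_def
        by (rule pw_le) (use phpos[of z] gpos[of "fst z"] in \<open>auto intro: less_imp_le simp: fr_def\<close>)
    qed
    also have "\<dots> = (\<integral>\<^sup>+ v. (\<integral>\<^sup>+ x. ennreal (ph (x, v) / (g x * fr x)) \<partial>p) \<partial>Q)"
      unfolding M_def by (subst pQ.nn_integral_snd[symmetric]) (auto simp: measM[unfolded M_def] fr_def)
    also have "\<dots> \<le> (\<integral>\<^sup>+ v. 1 \<partial>Q)" by (rule nn_integral_mono) (rule inner)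
    also have "\<dots> = 1" by (simp add: Q.emeasure_space_1)
    finally show ?thesis .
  qed
  have hnn: "\<And>z. 0 \<le> h z" unfolding h_def fr_def \<rho>r_def using phpos gpos
    by (simp add: less_imp_le)
  have hint: "integrable J h"
    using nn1 hnn by (intro integrableI_nonneg) (auto simp: measJ top.not_eq_extremum dest: order.strict_trans1 intro: le_less_trans[OF _ ennreal_less_top[of 1]])
  have hle: "(\<integral>z. h z \<partial>J) \<le> 1"
  proof -
    have "ennreal (\<integral>z. h z \<partial>J) = (\<integral>\<^sup>+ z. ennreal (h z) \<partial>J)"
      using hint hnn by (subst nn_integral_eq_integral) auto
    then have "ennreal (\<integral>z. h z \<partial>J) \<le> 1" using nn1 by simp
    then show ?thesis by (simp add: ennreal_le_1)
  qed
  define Lh where "Lh z = - (fst z - snd z)\<^sup>2 / (2 * d) - ln (2 * pi * d) / 2 + (fst z - mX)\<^sup>2 / (2 * sX\<^sup>2)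
      + ln (2 * pi * sX\<^sup>2) / 2 - lnf (fst z) - lnr z" for z
  have lnnd: "\<And>mu sig x. sig > 0 \<Longrightarrow> ln (normal_density mu sig x) = - (x - mu)\<^sup>2 / (2 * sig\<^sup>2) - ln (2 * pi * sig\<^sup>2) / 2"
    by (simp add: normal_density_def ln_div ln_sqrt)
  have AEh: "AE z in J. 0 < h z \<and> ln (h z) = Lh z"
    using AEJ\<rho> AEJp
  proof eventually_elim
    case (elim z)
    have r1: "0 < \<rho>r z" unfolding \<rho>r_def using elim by (simp add: enn2real_positive_iff less_top)
    have r2: "0 < fr (fst z)" unfolding fr_def using elim by (simp add: enn2real_positive_iff less_top)
    have hp: "0 < h z" unfolding h_def using r1 r2 phpos[of z] gpos[of "fst z"] by simp
    have "ln (h z) = ln (ph z) - ln (g (fst z)) - ln (fr (fst z)) - ln (\<rho>r z)"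
      unfolding h_def using r1 r2 phpos[of z] gpos[of "fst z"] by (simp add: ln_div ln_mult)
    also have "\<dots> = Lh z"
      unfolding Lh_def ph_def g_def lnf_def lnr_def fr_def \<rho>r_def \<rho>_def \<rho>p_def
      using lnnd[OF sd, of "snd z" "fst z"] lnnd[OF sX, of mX "fst z"] d by simp
    finally show ?case using hp by simp
  qed
  have [measurable]: "lnf \<in> borel_measurable borel" unfolding lnf_def \<rho>p_def[symmetric] by simp
  have [measurable]: "lnr \<in> borel_measurable (borel \<Otimes>\<^sub>M borel)" unfolding lnr_def \<rho>_def[symmetric] by simp
  have [measurable]: "Lh \<in> borel_measurable (borel \<Otimes>\<^sub>M borel)" unfolding Lh_def by measurable
  have sqint: "integrable J (\<lambda>z. (fst z - snd z)\<^sup>2)"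
    using fin by (intro integrableI_nonneg) (auto simp: measJ)
  have DJ: "enn2real (\<integral>\<^sup>+ z. ennreal ((fst z - snd z)\<^sup>2) \<partial>J) = (\<integral>z. (fst z - snd z)\<^sup>2 \<partial>J)"
    using sqint by (subst nn_integral_eq_integral) auto
  have xint: "integrable p (\<lambda>x. x)"
    using p.square_integrable_imp_integrable[OF _ psq] by (simp add: measp)
  have pmX: "integrable p (\<lambda>x. (x - mX)\<^sup>2)"
  proof -
    have "integrable p (\<lambda>x. x\<^sup>2 - 2 * mX * x + mX\<^sup>2)" using psq xint by simp
    then show ?thesis by (simp add: power2_eq_square algebra_simps)
  qed
  have JmX: "integrable J (\<lambda>z. (fst z - mX)\<^sup>2)"
    using pmX unfolding Jfst[symmetric] by (subst (asm) integrable_distr_eq) (auto simp: measJ)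
  have JmXv: "(\<integral>z. (fst z - mX)\<^sup>2 \<partial>J) = (\<integral>x. (x - mX)\<^sup>2 \<partial>p)"
    unfolding Jfst[symmetric] by (subst integral_distr) (auto simp: measJ)
  have Jlnf: "integrable J (\<lambda>z. lnf (fst z))"
    using KLc unfolding Jfst[symmetric] by (subst (asm) integrable_distr_eq) (auto simp: measJ)
  have Jlnfv: "(\<integral>z. lnf (fst z) \<partial>J) = (\<integral>x. lnf x \<partial>p)"
    unfolding Jfst[symmetric] by (subst integral_distr) (auto simp: measJ)
  have Lhint: "integrable J Lh" unfolding Lh_def
    using sqint JmX Jlnf MIc by (intro Bochner_Integration.integrable_diff Bochner_Integration.integrable_add integrable_divide) auto
  have LhI: "(\<integral>z. Lh z \<partial>J) = - (\<integral>z. (fst z - snd z)\<^sup>2 \<partial>J) / (2 * d) - ln (2 * pi * d) / 2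
      + (\<integral>x. (x - mX)\<^sup>2 \<partial>p) / (2 * sX\<^sup>2) + ln (2 * pi * sX\<^sup>2) / 2 - (\<integral>x. lnf x \<partial>p) - (\<integral>z. lnr z \<partial>J)"
    unfolding Lh_def JmXv[symmetric] Jlnfv[symmetric]
    using sqint JmX Jlnf MIc by (simp add: Bochner_Integration.integral_diff Bochner_Integration.integral_add J.prob_space)
  have lnhint: "integrable J (\<lambda>z. ln (h z))"
    by (rule integrable_cong_AE_imp[OF Lhint]) (use AEh in \<open>auto simp: measJ elim: AE_mp\<close>)
  have "(\<integral>z. Lh z \<partial>J) = (\<integral>z. ln (h z) \<partial>J)"
    by (rule integral_cong_AE) (use AEh in \<open>auto simp: measJ elim: AE_mp\<close>)
  also have "\<dots> \<le> (\<integral>z. h z - 1 \<partial>J)"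
    by (rule integral_mono_AE[OF lnhint]) (use hint AEh in \<open>auto elim: AE_mp intro: ln_le_minus_one\<close>)
  also have "\<dots> = (\<integral>z. h z \<partial>J) - 1" using hint by (simp add: J.prob_space)
  also have "\<dots> \<le> 0" using hle by simp
  finally have main: "(\<integral>z. Lh z \<partial>J) \<le> 0" .
  show ?thesis using main unfolding LhI DJ using KLc MIc by linarith
qed


theorem lemma2:
  fixes mu_X sigma_X R R_c P :: real and p :: "real measure"
  assumes "sigma_X > 0" and "R \<ge> 0" and "R_c \<ge> 0" and "P \<ge> 0"
    and "prob_space p" and "sets p = sets borel"
    and "integrable p (\<lambda>x. x\<^sup>2)"
    and "phi_KL p (gauss mu_X (sigma_X\<^sup>2)) \<le> ereal P"
  shows "let mu_hat = (\<integral>x. x \<partial>p);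
             var_hat = (\<integral>x. (x - mu_hat)\<^sup>2 \<partial>p)
         in distortion_rate (R + R_c) p \<ge>
              ennreal (var_hat * exp (-2 * (R + R_c + P
                 - real_of_ereal (phi_KL (gauss mu_hat var_hat) (gauss mu_X (sigma_X\<^sup>2))))))"
proof -
  note sX = assms(1) and pP = assms(5) and psets = assms(6) and psq = assms(7) and KL = assms(8)
  interpret p: prob_space p by (rule pP)
  define m where "m = (\<integral>x. x \<partial>p)"
  define v where "v = (\<integral>x. (x - m)\<^sup>2 \<partial>p)"
  have measp: "\<And>N. measurable p N = measurable borel N"
    by (rule measurable_cong_sets[OF psets refl])
  have xint: "integrable p (\<lambda>x. x)"
    using p.square_integrable_imp_integrable[OF _ psq] by (simp add: measp)
  have sqc: "\<And>c. integrable p (\<lambda>x. (x - c)\<^sup>2)"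
  proof -
    fix c
    have "integrable p (\<lambda>x. x\<^sup>2 - 2 * c * x + c\<^sup>2)" using psq xint by simp
    then show "integrable p (\<lambda>x. (x - c)\<^sup>2)" by (simp add: power2_eq_square algebra_simps)
  qed
  have Emx: "(\<integral>x. (x - mu_X)\<^sup>2 \<partial>p) = v + (m - mu_X)\<^sup>2"
  proof -
    have "(\<lambda>x. (x - mu_X)\<^sup>2) = (\<lambda>x. (x - m)\<^sup>2 + 2 * (m - mu_X) * x + (mu_X\<^sup>2 - m\<^sup>2))"
      by (rule ext) (simp add: power2_eq_square algebra_simps)
    then have "(\<integral>x. (x - mu_X)\<^sup>2 \<partial>p) = v + 2 * (m - mu_X) * m + (mu_X\<^sup>2 - m\<^sup>2)"
      using sqc[of m] xint by (simp add: v_def m_def p.prob_space)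
    then show ?thesis by (simp add: power2_eq_square algebra_simps)
  qed
  have vpos: "v > 0"
  proof -
    have v0: "v \<ge> 0" unfolding v_def by simp
    show ?thesis
    proof (rule ccontr)
      assume "\<not> v > 0"
      then have "v = 0" using v0 by simp
      then have "AE x in p. (x - m)\<^sup>2 = 0" unfolding v_def
        using integral_nonneg_eq_0_iff_AE[OF sqc[of m]] by simp
      then have AE1: "AE x in p. x = m" by simp
      define G where "G = density lborel (normal_density mu_X sigma_X)"
      have Gdef: "gauss mu_X (sigma_X\<^sup>2) = G" using sX by (simp add: gauss_def G_def)
      have ac: "absolutely_continuous G p" and se: "sets p = sets G"
        using KL unfolding Gdef phi_KL_def by (auto split: if_splits)
      have "AE x in lborel. x \<in> {m} \<longrightarrow> normal_density mu_X sigma_X x = 0"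
        using AE_lborel_singleton[of m] by eventually_elim auto
      then have "{m} \<in> null_sets G" unfolding G_def by (subst null_sets_density_iff) auto
      then have "{m} \<in> null_sets p" using ac unfolding absolutely_continuous_def by auto
      then have "AE x in p. x \<noteq> m" using AE_not_in by fastforce
      with AE1 have "AE x in p. False" by eventually_elim auto
      then show False by (simp add: p.AE_False)
    qed
  qed
  define K where "K = ln (sigma_X\<^sup>2 / v) / 2 + (v + (m - mu_X)\<^sup>2) / (2 * sigma_X\<^sup>2) - 1 / 2"
  have Kv: "real_of_ereal (phi_KL (gauss m v) (gauss mu_X (sigma_X\<^sup>2))) = K"
    unfolding K_def using gauss_KL[OF vpos sX, of m mu_X] by simp
  define r where "r = R + R_c"
  define T where "T = v * exp (-2 * (r + P - K))"
  have Tpos: "T > 0" using vpos by (simp add: T_def)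
  have "ennreal T \<le> distortion_rate r p"
    unfolding distortion_rate_def
  proof (rule INF_greatest)
    fix J assume "J \<in> {J. prob_space J \<and> sets J = sets (borel \<Otimes>\<^sub>M borel) \<and> distr J borel fst = p \<and> mutual_info J \<le> ereal r}"
    then have JP: "prob_space J" and Js: "sets J = sets (borel \<Otimes>\<^sub>M borel)" and Jf: "distr J borel fst = p"
      and MI: "mutual_info J \<le> ereal r" by auto
    show "ennreal T \<le> (\<integral>\<^sup>+ z. ennreal ((fst z - snd z)\<^sup>2) \<partial>J)"
    proof (cases "(\<integral>\<^sup>+ z. ennreal ((fst z - snd z)\<^sup>2) \<partial>J) < \<infinity>")
      case False then show ?thesis by (simp add: less_top[symmetric])
    next
      case True
      define DJ where "DJ = enn2real (\<integral>\<^sup>+ z. ennreal ((fst z - snd z)\<^sup>2) \<partial>J)"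
      have c: "- ln (2 * pi * T) / 2 - DJ / (2 * T) + ln (2 * pi * sigma_X\<^sup>2) / 2
          + (\<integral>x. (x - mu_X)\<^sup>2 \<partial>p) / (2 * sigma_X\<^sup>2) \<le> P + r"
        unfolding DJ_def by (rule core[OF sX Tpos pP psets psq KL JP Js Jf MI True])
      have lnT: "ln (2 * pi * T) = ln (2 * pi) + ln v - 2 * (r + P - K)"
        unfolding T_def using vpos by (simp add: ln_mult)
      have lnS: "ln (2 * pi * sigma_X\<^sup>2) = ln (2 * pi) + ln (sigma_X\<^sup>2)"
        using sX by (simp add: ln_mult)
      have Kx: "K = (ln (sigma_X\<^sup>2) - ln v) / 2 + (v + (m - mu_X)\<^sup>2) / (2 * sigma_X\<^sup>2) - 1 / 2"
        unfolding K_def using sX vpos by (simp add: ln_div)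
      have eq: "- ln (2 * pi * T) / 2 + ln (2 * pi * sigma_X\<^sup>2) / 2
          + (\<integral>x. (x - mu_X)\<^sup>2 \<partial>p) / (2 * sigma_X\<^sup>2) = 1 / 2 + r + P"
        unfolding lnT lnS Emx using sX by (simp add: Kx field_simps)
      have "1 / 2 + r + P - DJ / (2 * T) \<le> P + r"
        using c eq by linarith
      then have h1: "1 / 2 \<le> DJ / (2 * T)" by linarith
      have "DJ / T = 2 * (DJ / (2 * T))" by simp
      then have "1 \<le> DJ / T" using h1 by linarith
      then have "DJ \<ge> T" using Tpos by (simp add: le_divide_eq)
      then have "ennreal T \<le> ennreal DJ" by (rule ennreal_leI)
      also have "ennreal DJ = (\<integral>\<^sup>+ z. ennreal ((fst z - snd z)\<^sup>2) \<partial>J)"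
        unfolding DJ_def using True by (simp add: less_top)
      finally show ?thesis .
    qed
  qed
  then show ?thesis unfolding Let_def m_def[symmetric] v_def[symmetric] Kv r_def[symmetric] T_def by simp
qed
end
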